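(* Let $\beta,\lambda>0$, let $K_-\le K_+$ be integers, and let $f(x)=\sum_{k=K_-}^{K_+}c_ke^{-\lambda(x-\beta k)^2}$ with $c_k\in\mathbb C$, $c_{K_-}\neq0$, $c_{K_+}\neq0$. Let $\Gamma\subset\mathbb R$ be a set of $2(K_+-K_-)+1$ distinct points. Then $f$ is determined, up to a unimodular constant and conjugation, by the phaseless samples $|f(\gamma)|$ and $|f'(\gamma)|$, $\gamma\in\Gamma$: that is, if $g(x)=\sum_{k=K_-}^{K_+}d_ke^{-\lambda(x-\beta k)^2}$ with $d_k\in\mathbb C$ satisfies $|g(\gamma)|=|f(\gamma)|$ and $|g'(\gamma)|=|f'(\gamma)|$ for all $\gamma\in\Gamma$, then there is $z\in\mathbb C$, $|z|=1$, with $g=zf$ or $g=z\overline f$.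
   Context: Here $K_-=\min\{k: c_k\neq0\}$ and $K_+=\max\{k:c_k\neq0\}$, i.e. $f$ is a function of finite duration in the Gaussian shift-invariant space $\{\sum_{k\in\mathbb Z}c_ke^{-\lambda(\cdot-\beta k)^2}: \{c_k\}\in\ell^\infty(\mathbb Z)\}$. *)

theory Defs
  imports "HOL-Analysis.Analysis"
begin

definition gauss_sum :: "real \<Rightarrow> real \<Rightarrow> int \<Rightarrow> int \<Rightarrow> (int \<Rightarrow> complex) \<Rightarrow> real \<Rightarrow> complex" where
  "gauss_sum beta lam Km Kp c x =
     (\<Sum>k=Km..Kp. c k * complex_of_real (exp (- lam * (x - beta * real_of_int k)^2)))"

end

theory Submission
  imports Defs "HOL-Computational_Algebra.Polynomial"
begin


abbreviation star :: "complex poly \<Rightarrow> complex poly" where "star p \<equiv> map_poly cnj p"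

lemma star_mult: "star (p*q) = star p * star q"
  by (rule poly_eq_poly_eq_iff[THEN iffD1]) (auto simp: fun_eq_iff)
lemma star_add: "star (p+q) = star p + star q"
  by (rule poly_eq_poly_eq_iff[THEN iffD1]) (auto simp: fun_eq_iff)
lemma star_diff: "star (p-q) = star p - star q"
  by (rule poly_eq_poly_eq_iff[THEN iffD1]) (auto simp: fun_eq_iff)
lemma star_smult: "star (smult a p) = smult (cnj a) (star p)"
  by (rule poly_eq_poly_eq_iff[THEN iffD1]) (auto simp: fun_eq_iff)
lemma star_star: "star (star p) = p"
  by (rule poly_eq_poly_eq_iff[THEN iffD1]) (auto simp: fun_eq_iff)
lemma star_pderiv: "star (pderiv p) = pderiv (star p)"
  by (rule poly_eqI) (simp add: coeff_pderiv coeff_map_poly)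
lemma star_X: "star [:0,1:] = [:0,1:]"
  by (rule poly_eq_poly_eq_iff[THEN iffD1]) (auto simp: fun_eq_iff)
lemma star_eq0: "star p = 0 \<longleftrightarrow> p = 0"
  by (metis map_poly_0 star_star)
lemma degree_star: "degree (star p) = degree p"
  by (rule degree_map_poly) simp

lemma wronsk_const:
  fixes Q R :: "complex poly"
  assumes QR: "pderiv Q * R = pderiv R * Q" and R0: "R \<noteq> 0"
  shows "\<exists>z. Q = smult z R"
proof -
  obtain t0 where t0: "poly R t0 \<noteq> 0"
    using R0 poly_all_0_iff_0 by blast
  define z where "z = poly Q t0 / poly R t0"
  define S where "S = Q - smult z R"
  have SR: "pderiv S * R = pderiv R * S"
    using QR by (simp add: S_def pderiv_diff pderiv_smult algebra_simps)
  have St0: "poly S t0 = 0" using t0 by (simp add: S_def z_def)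
  have "S = 0"
  proof (rule ccontr)
    assume S0: "S \<noteq> 0"
    define L where "L = [:-t0, 1:]"
    obtain T where T: "S = L ^ order t0 S * T" and nd: "\<not> L dvd T"
      using order_decomp[OF S0] unfolding L_def by blast
    have "order t0 S \<noteq> 0" using St0 S0 order_root by blast
    then obtain j where j: "order t0 S = Suc j" by (cases "order t0 S") auto
    have pL: "pderiv L = 1" by (simp add: L_def pderiv_pCons)
    have dS: "pderiv S = smult (of_nat (Suc j)) (L ^ j) * T + L ^ Suc j * pderiv T"
      by (subst T, simp only: j pderiv_mult pderiv_power_Suc pL) (simp add: algebra_simps)
    have e1: "pderiv S * R = L ^ j * (smult (of_nat (Suc j)) (T * R) + L * pderiv T * R)"
      unfolding dS by (simp add: algebra_simps)
    have e2: "pderiv R * S = L ^ j * (L * pderiv R * T)"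
      by (subst T) (simp add: j algebra_simps)
    have "L ^ j * (smult (of_nat (Suc j)) (T * R) + L * pderiv T * R) = L ^ j * (L * pderiv R * T)"
      using SR e1 e2 by simp
    moreover have "L ^ j \<noteq> 0" by (simp add: L_def)
    ultimately have eq: "smult (of_nat (Suc j)) (T * R) + L * pderiv T * R = L * pderiv R * T"
      using mult_left_cancel by blast
    have "poly L t0 = 0" by (simp add: L_def)
    hence "of_nat (Suc j) * (poly T t0 * poly R t0) = 0"
      using arg_cong[OF eq, of "\<lambda>p. poly p t0"] by simp
    moreover have "poly T t0 \<noteq> 0" using nd by (simp add: L_def poly_eq_0_iff_dvd)
    moreover have "(of_nat (Suc j) :: complex) \<noteq> 0" by (simp only: of_nat_eq_0_iff)
    ultimately show False using t0 by simp
  qed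
  thus ?thesis unfolding S_def by auto
qed

lemma phase_same:
  fixes Q R :: "complex poly"
  assumes R0: "R \<noteq> 0" and I1: "R * star R = Q * star Q" and I2: "pderiv Q * star Q = pderiv R * star R"
  shows "\<exists>z. cmod z = 1 \<and> Q = smult z R"
proof -
  have "R * star R \<noteq> 0" using R0 by (simp add: star_eq0)
  hence Q0: "Q \<noteq> 0" using I1 by auto
  have "star Q * (pderiv Q * R - pderiv R * Q) = 0"
  proof -
    have "star Q * (pderiv Q * R - pderiv R * Q) = (pderiv Q * star Q) * R - pderiv R * (Q * star Q)"
      by (simp add: algebra_simps)
    also have "\<dots> = 0" using I1 I2 by (simp add: algebra_simps)
    finally show ?thesis .
  qed
  hence "pderiv Q * R = pderiv R * Q" using Q0 by (simp add: star_eq0)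
  then obtain z where z: "Q = smult z R" using wronsk_const R0 by blast
  have h: "R * star R = smult (z * cnj z) (R * star R)"
    using I1 unfolding z by (simp add: star_smult mult.commute)
  have "smult (1 - z * cnj z) (R * star R) = R * star R - smult (z * cnj z) (R * star R)"
    by (simp add: smult_diff_left)
  also have "\<dots> = 0" using h by simp
  finally have "smult (1 - z * cnj z) (R * star R) = 0" .
  hence "1 - z * cnj z = 0" using \<open>R * star R \<noteq> 0\<close> by (simp only: smult_eq_0_iff) blast
  hence "z * cnj z = 1" by simp
  hence "cmod z ^ 2 = 1"
    by (metis complex_norm_square of_real_eq_1_iff)
  hence "cmod z = 1" using norm_ge_zero[of z] by (simp add: power2_eq_1_iff)
  with z show ?thesis by blast
qed

lemma poly_phase:
  fixes P Q :: "complex poly"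
  assumes P0: "P \<noteq> 0" and I1: "P * star P = Q * star Q"
    and I2: "pderiv P * star (pderiv P) = pderiv Q * star (pderiv Q)"
  shows "\<exists>z. cmod z = 1 \<and> (Q = smult z P \<or> Q = smult z (star P))"
proof -
  define B where "B = pderiv P * star P"
  define C where "C = pderiv Q * star Q"
  have dP: "pderiv (P * star P) = B + star B"
    by (simp add: B_def pderiv_mult star_mult star_star star_pderiv algebra_simps)
  have dQ: "pderiv (Q * star Q) = C + star C"
    by (simp add: C_def pderiv_mult star_mult star_star star_pderiv algebra_simps)
  have s: "C + star C = B + star B" using dP dQ I1 by simp
  have p: "C * star C = B * star B"
  proof -
    have "C * star C = (pderiv Q * star (pderiv Q)) * (Q * star Q)"
      by (simp add: C_def star_mult star_star star_pderiv algebra_simps)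
    also have "\<dots> = (pderiv P * star (pderiv P)) * (P * star P)" using I1 I2 by simp
    also have "\<dots> = B * star B"
      by (simp add: B_def star_mult star_star star_pderiv algebra_simps)
    finally show ?thesis .
  qed
  have "(C - B) * (C - star B) = C * C - C * (B + star B) + B * star B"
    by (simp add: algebra_simps)
  also have "\<dots> = C * C - C * (C + star C) + C * star C" using s p by simp
  also have "\<dots> = 0" by (simp add: algebra_simps)
  finally have "C = B \<or> C = star B" by simp
  thus ?thesis
  proof
    assume "C = B"
    then show ?thesis using phase_same[OF P0 I1] by (auto simp: B_def C_def)
  next
    assume h: "C = star B"
    have "star P \<noteq> 0" using P0 by (simp add: star_eq0)
    moreover have "star P * star (star P) = Q * star Q" using I1 by (simp add: star_star mult.commute)
    moreover have "pderiv Q * star Q = pderiv (star P) * star (star P)"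
      using h by (simp add: B_def C_def star_mult star_star star_pderiv)
    ultimately show ?thesis using phase_same by blast
  qed
qed



definition acoef :: "real \<Rightarrow> real \<Rightarrow> int \<Rightarrow> (int \<Rightarrow> complex) \<Rightarrow> nat \<Rightarrow> complex" where
  "acoef beta lam Km c j = c (Km + int j) * of_real (exp (- lam * (beta * real_of_int (Km + int j))^2))"

definition PP :: "real \<Rightarrow> real \<Rightarrow> int \<Rightarrow> int \<Rightarrow> (int \<Rightarrow> complex) \<Rightarrow> complex poly" where
  "PP beta lam Km Kp c = (\<Sum>j\<le>nat (Kp - Km). monom (acoef beta lam Km c j) j)"

definition MM :: "real \<Rightarrow> real \<Rightarrow> int \<Rightarrow> int \<Rightarrow> (int \<Rightarrow> complex) \<Rightarrow> complex poly" where
  "MM beta lam Km Kp c = (\<Sum>j\<le>nat (Kp - Km). monom (acoef beta lam Km c j * of_int (Km + int j)) j)"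

lemma coeff_summonom: "coeff (\<Sum>j\<le>N. monom (f j) j) n = (if n \<le> N then f n else 0)"
  by (simp add: coeff_sum coeff_monom)

lemma degree_summonom: "degree (\<Sum>j\<le>N. monom (f j) j) \<le> N"
  by (rule degree_sum_le) (auto intro: order.trans[OF degree_monom_le])

lemma MM_eq: "MM beta lam Km Kp c = smult (of_int Km) (PP beta lam Km Kp c) + [:0,1:] * pderiv (PP beta lam Km Kp c)"
proof (rule poly_eqI)
  fix n
  show "coeff (MM beta lam Km Kp c) n = coeff (smult (of_int Km) (PP beta lam Km Kp c) + [:0,1:] * pderiv (PP beta lam Km Kp c)) n"
    unfolding MM_def PP_def
    by (cases n) (auto simp: coeff_summonom coeff_pderiv algebra_simps)
qed

lemma reindex:
  assumes "Km \<le> Kp"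
  shows "(\<Sum>k=Km..Kp. g k) = (\<Sum>j\<le>nat (Kp - Km). g (Km + int j))"
  by (rule sum.reindex_bij_witness[of _ "\<lambda>j. Km + int j" "\<lambda>k. nat (k - Km)"]) (use assms in auto)

lemma expsplit:
  "exp (- lam * (x - beta * real_of_int (Km + int j))^2) =
     exp (- lam * x^2 + 2*lam*beta*real_of_int Km*x) * exp (2*lam*beta*x) ^ j *
     exp (- lam * (beta * real_of_int (Km + int j))^2)"
proof -
  have "exp (- lam * x^2 + 2*lam*beta*real_of_int Km*x) * exp (2*lam*beta*x) ^ j *
     exp (- lam * (beta * real_of_int (Km + int j))^2)
    = exp ((- lam * x^2 + 2*lam*beta*real_of_int Km*x) + real j * (2*lam*beta*x) +
     (- lam * (beta * real_of_int (Km + int j))^2))"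
    by (simp only: exp_add exp_of_nat_mult)
  also have "(- lam * x^2 + 2*lam*beta*real_of_int Km*x) + real j * (2*lam*beta*x) +
     (- lam * (beta * real_of_int (Km + int j))^2) = - lam * (x - beta * real_of_int (Km + int j))^2"
    by (simp add: power2_eq_square algebra_simps)
  finally show ?thesis by simp
qed

lemma term1:
  "c (Km + int j) * complex_of_real (exp (- lam * (x - beta * real_of_int (Km + int j))^2)) =
   complex_of_real (exp (- lam * x^2 + 2*lam*beta*real_of_int Km*x)) * (acoef beta lam Km c j * complex_of_real (exp (2*lam*beta*x)) ^ j)"
  unfolding expsplit[of lam x beta Km j] acoef_def of_real_mult of_real_power by (simp only: mult_ac)

lemma term2:
  "c (Km + int j) * complex_of_real (exp (- lam * (x - beta * real_of_int (Km + int j))^2) * (- 2 * lam * (x - beta * real_of_int (Km + int j)))) =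
   complex_of_real (exp (- lam * x^2 + 2*lam*beta*real_of_int Km*x)) * (complex_of_real (-2*lam*x) * (acoef beta lam Km c j * complex_of_real (exp (2*lam*beta*x)) ^ j) +
    complex_of_real (2*lam*beta) * (acoef beta lam Km c j * of_int (Km + int j) * complex_of_real (exp (2*lam*beta*x)) ^ j))"
proof -
  have "complex_of_real (- 2 * lam * (x - beta * real_of_int (Km + int j))) =
     complex_of_real (-2*lam*x) + complex_of_real (2*lam*beta) * of_int (Km + int j)"
    by (simp add: algebra_simps)
  moreover have "c (Km + int j) * complex_of_real (exp (- lam * (x - beta * real_of_int (Km + int j))^2) * (- 2 * lam * (x - beta * real_of_int (Km + int j))))
     = (c (Km + int j) * complex_of_real (exp (- lam * (x - beta * real_of_int (Km + int j))^2))) * complex_of_real (- 2 * lam * (x - beta * real_of_int (Km + int j)))"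
    by (simp only: of_real_mult mult.assoc)
  ultimately show ?thesis
    unfolding term1 by (simp only: algebra_simps)
qed

lemma gs_poly:
  assumes "Km \<le> Kp"
  shows "gauss_sum beta lam Km Kp c x =
    of_real (exp (- lam * x^2 + 2*lam*beta*real_of_int Km*x)) * poly (PP beta lam Km Kp c) (of_real (exp (2*lam*beta*x)))"
  unfolding gauss_sum_def reindex[OF assms] PP_def poly_sum sum_distrib_left
  by (rule sum.cong) (simp_all only: term1 poly_monom)

lemma gs_deriv:
  "(gauss_sum beta lam Km Kp c has_vector_derivative
     (\<Sum>k=Km..Kp. c k * of_real (exp (- lam * (x - beta * real_of_int k)^2) * (- 2 * lam * (x - beta * real_of_int k))))) (at x)"
proof -
  have e: "gauss_sum beta lam Km Kp c = (\<lambda>x. \<Sum>k=Km..Kp. c k * complex_of_real (exp (- lam * (x - beta * real_of_int k)^2)))"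
    by (simp add: fun_eq_iff gauss_sum_def)
  have r: "((\<lambda>x. exp (- lam * (x - beta * real_of_int k)^2)) has_real_derivative
           exp (- lam * (x - beta * real_of_int k)^2) * (- 2 * lam * (x - beta * real_of_int k))) (at x)" for k
    by (auto intro!: derivative_eq_intros simp: algebra_simps)
  show ?thesis unfolding e
    by (intro has_vector_derivative_sum has_vector_derivative_mult_right has_vector_derivative_of_real r)
qed

lemma gs_deriv_poly:
  assumes "Km \<le> Kp"
  shows "vector_derivative (gauss_sum beta lam Km Kp c) (at x) =
    of_real (exp (- lam * x^2 + 2*lam*beta*real_of_int Km*x)) *
      (of_real (-2*lam*x) * poly (PP beta lam Km Kp c) (of_real (exp (2*lam*beta*x))) +
       of_real (2*lam*beta) * poly (MM beta lam Km Kp c) (of_real (exp (2*lam*beta*x))))"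
  unfolding vector_derivative_at[OF gs_deriv] reindex[OF assms] PP_def MM_def poly_sum sum_distrib_left
    distrib_left sum.distrib[symmetric]
  by (rule sum.cong) (simp_all only: term2 poly_monom distrib_left)



lemma sample_zero:
  fixes p :: "complex poly" and T :: "real \<Rightarrow> real"
  assumes "finite \<Gamma>" "inj_on T \<Gamma>" "degree p < card \<Gamma>" "\<forall>\<gamma>\<in>\<Gamma>. poly p (of_real (T \<gamma>)) = 0"
  shows "p = 0"
proof (rule poly_eqI_degree[of "(\<lambda>\<gamma>. complex_of_real (T \<gamma>)) ` \<Gamma>"])
  have "inj_on (\<lambda>\<gamma>. complex_of_real (T \<gamma>)) \<Gamma>"
    using assms(2) by (auto simp: inj_on_def)
  hence "card ((\<lambda>\<gamma>. complex_of_real (T \<gamma>)) ` \<Gamma>) = card \<Gamma>" by (rule card_image)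
  thus "degree p < card ((\<lambda>\<gamma>. complex_of_real (T \<gamma>)) ` \<Gamma>)" "degree 0 < card ((\<lambda>\<gamma>. complex_of_real (T \<gamma>)) ` \<Gamma>)"
    using assms(3) by auto
qed (use assms(4) in auto)

lemma poly_star_real: "poly (star p) (complex_of_real t) = cnj (poly p (complex_of_real t))"
  by simp

lemma poly_norm_sq: "poly (p * star p) (complex_of_real t) = complex_of_real ((cmod (poly p (complex_of_real t)))^2)"
  using complex_norm_square[of "poly p (complex_of_real t)"] by simp

lemma star_pCons: "star (pCons a q) = pCons (cnj a) (star q)"
  by (rule poly_eqI) (simp add: coeff_map_poly coeff_pCons split: nat.split)

lemma MM_star_gen: "star X = X \<Longrightarrow> M = smult (of_int k) P + X * pderiv P \<Longrightarrow>
  star M = smult (of_int k) (star P) + X * pderiv (star P)"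
  by (simp add: star_add star_smult star_mult star_pderiv)

lemma WW_gen:
  assumes X: "star X = X" and M: "M = smult (of_int k) P + X * pderiv P"
  shows "(smult (complex_of_real u) P + smult (complex_of_real v) M) * star (smult (complex_of_real u) P + smult (complex_of_real v) M)
    = smult (complex_of_real u ^ 2) (P * star P) + smult (complex_of_real u * complex_of_real v)
        (smult (of_int k) (P * star P + P * star P) + X * pderiv (P * star P))
       + smult (complex_of_real v ^ 2) (M * star M)"
proof -
  have sM: "star M = smult (of_int k) (star P) + X * pderiv (star P)" using MM_star_gen[OF X M] .
  have "(smult (complex_of_real u) P + smult (complex_of_real v) M) * star (smult (complex_of_real u) P + smult (complex_of_real v) M)
     = smult (complex_of_real u ^ 2) (P * star P) + smult (complex_of_real u * complex_of_real v) (P * star M + M * star P)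
       + smult (complex_of_real v ^ 2) (M * star M)"
    by (simp add: star_add star_smult algebra_simps power2_eq_square smult_add_right)
  also have "P * star M + M * star P = smult (of_int k) (P * star P + P * star P) + X * pderiv (P * star P)"
    unfolding sM by (subst M) (simp add: pderiv_mult algebra_simps smult_add_right)
  finally show ?thesis .
qed

lemma MMsq_gen:
  assumes X: "star X = X" and M: "M = smult (of_int k) P + X * pderiv P"
  shows "M * star M = smult (of_int k ^ 2) (P * star P) + smult (of_int k) (X * pderiv (P * star P))
     + X * X * (pderiv P * star (pderiv P))"
  unfolding MM_star_gen[OF X M] by (subst M) (simp add: pderiv_mult star_pderiv algebra_simps power2_eq_square smult_add_right)

lemmas WW = WW_gen[OF star_X]
lemmas MMsq = MMsq_gen[OF star_X]

theorem theorem4p1: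
  fixes beta lam :: real and Km Kp :: int and c d :: "int \<Rightarrow> complex" and \<Gamma> :: "real set"
  assumes "beta > 0" and "lam > 0" and "Km \<le> Kp"
    and "c Km \<noteq> 0" and "c Kp \<noteq> 0"
    and "finite \<Gamma>" and "int (card \<Gamma>) = 2 * (Kp - Km) + 1"
    and "\<forall>\<gamma>\<in>\<Gamma>. cmod (gauss_sum beta lam Km Kp d \<gamma>) = cmod (gauss_sum beta lam Km Kp c \<gamma>)"
    and "\<forall>\<gamma>\<in>\<Gamma>. cmod (vector_derivative (gauss_sum beta lam Km Kp d) (at \<gamma>))
                 = cmod (vector_derivative (gauss_sum beta lam Km Kp c) (at \<gamma>))"
  shows "\<exists>z::complex. cmod z = 1 \<and>
           ((\<forall>x. gauss_sum beta lam Km Kp d x = z * gauss_sum beta lam Km Kp c x) \<or>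
            (\<forall>x. gauss_sum beta lam Km Kp d x = z * cnj (gauss_sum beta lam Km Kp c x)))"
proof -
  note bl = assms(1,2) and K = assms(3)
  define N where "N = nat (Kp - Km)"
  have "int (2*N+1) = 2*(Kp-Km)+1" using K by (simp add: N_def)
  hence "int (card \<Gamma>) = int (2*N+1)" using assms(7) by simp
  hence cardG: "card \<Gamma> = 2 * N + 1" by (simp only: of_nat_eq_iff)
  define T where "T x = exp (2*lam*beta*x)" for x
  define E where "E x = exp (- lam * x^2 + 2*lam*beta*real_of_int Km*x)" for x
  have injT: "inj_on T \<Gamma>" using bl by (auto simp: inj_on_def T_def)
  have Epos: "E x > 0" for x by (simp add: E_def)
  define Pc where "Pc = PP beta lam Km Kp c"
  define Pd where "Pd = PP beta lam Km Kp d"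
  define Mc where "Mc = MM beta lam Km Kp c"
  define Md where "Md = MM beta lam Km Kp d"
  have degP: "degree (PP beta lam Km Kp e) \<le> N" for e
    unfolding PP_def N_def by (rule degree_summonom)
  have degM: "degree (MM beta lam Km Kp e) \<le> N" for e
    unfolding MM_def N_def by (rule degree_summonom)
  have degsq: "degree (p * star p) \<le> 2 * N" if "degree p \<le> N" for p
    using degree_mult_le[of p "star p"] that by (simp add: degree_star)
  have gs: "gauss_sum beta lam Km Kp e x = of_real (E x) * poly (PP beta lam Km Kp e) (of_real (T x))" for e x
    unfolding E_def T_def by (rule gs_poly[OF K])
  have gd: "vector_derivative (gauss_sum beta lam Km Kp e) (at x) =
    of_real (E x) * (of_real (-2*lam*x) * poly (PP beta lam Km Kp e) (of_real (T x)) +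
       of_real (2*lam*beta) * poly (MM beta lam Km Kp e) (of_real (T x)))" for e x
    unfolding E_def T_def by (rule gs_deriv_poly[OF K])
  have I1: "Pc * star Pc = Pd * star Pd"
  proof -
    have "Pc * star Pc - Pd * star Pd = 0"
    proof (rule sample_zero[OF assms(6) injT])
      show "degree (Pc * star Pc - Pd * star Pd) < card \<Gamma>"
        using degree_diff_le[OF degsq[OF degP] degsq[OF degP], of c d] cardG
        unfolding Pc_def Pd_def by linarith
      show "\<forall>\<gamma>\<in>\<Gamma>. poly (Pc * star Pc - Pd * star Pd) (complex_of_real (T \<gamma>)) = 0"
      proof
        fix \<gamma> assume g: "\<gamma> \<in> \<Gamma>"
        have "cmod (of_real (E \<gamma>) * poly Pd (of_real (T \<gamma>))) = cmod (of_real (E \<gamma>) * poly Pc (of_real (T \<gamma>)))"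
          using assms(8) g unfolding gs Pc_def Pd_def by blast
        hence "cmod (poly Pd (of_real (T \<gamma>))) = cmod (poly Pc (of_real (T \<gamma>)))"
          using Epos[of \<gamma>] by (simp add: norm_mult)
        thus "poly (Pc * star Pc - Pd * star Pd) (complex_of_real (T \<gamma>)) = 0"
          by (simp only: poly_diff poly_norm_sq) simp
      qed
    qed
    thus ?thesis by simp
  qed
  have Mc: "Mc = smult (of_int Km) Pc + [:0,1:] * pderiv Pc" unfolding Mc_def Pc_def by (rule MM_eq)
  have Md: "Md = smult (of_int Km) Pd + [:0,1:] * pderiv Pd" unfolding Md_def Pd_def by (rule MM_eq)
  have I3: "Mc * star Mc = Md * star Md"
  proof -
    have "Mc * star Mc - Md * star Md = 0"
    proof (rule sample_zero[OF assms(6) injT])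
      show "degree (Mc * star Mc - Md * star Md) < card \<Gamma>"
        using degree_diff_le[OF degsq[OF degM] degsq[OF degM], of c d] cardG
        unfolding Mc_def Md_def by linarith
      show "\<forall>\<gamma>\<in>\<Gamma>. poly (Mc * star Mc - Md * star Md) (complex_of_real (T \<gamma>)) = 0"
      proof
        fix \<gamma> assume g: "\<gamma> \<in> \<Gamma>"
        define u where "u = -2*lam*\<gamma>"
        define v where "v = 2*lam*beta"
        define t where "t = complex_of_real (T \<gamma>)"
        define Wc where "Wc = smult (complex_of_real u) Pc + smult (complex_of_real v) Mc"
        define Wd where "Wd = smult (complex_of_real u) Pd + smult (complex_of_real v) Md"
        have "cmod (of_real (E \<gamma>) * poly Wd t) = cmod (of_real (E \<gamma>) * poly Wc t)"
          using assms(9) g unfolding gd Pc_def Pd_def Mc_def Md_def Wc_def Wd_def u_def v_def t_def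
          by simp
        hence "cmod (poly Wd t) = cmod (poly Wc t)"
          using Epos[of \<gamma>] by (simp add: norm_mult)
        hence "poly (Wc * star Wc) t = poly (Wd * star Wd) t"
          unfolding t_def poly_norm_sq by simp
        hence "poly (smult (complex_of_real v ^ 2) (Mc * star Mc)) t = poly (smult (complex_of_real v ^ 2) (Md * star Md)) t"
          unfolding Wc_def Wd_def WW[OF Mc] WW[OF Md] I1 by simp
        moreover have "v \<noteq> 0" using bl by (simp add: v_def)
        ultimately show "poly (Mc * star Mc - Md * star Md) (complex_of_real (T \<gamma>)) = 0"
          unfolding t_def by simp
      qed
    qed
    thus ?thesis by simp
  qed
  have I2: "pderiv Pc * star (pderiv Pc) = pderiv Pd * star (pderiv Pd)"
  proof -
    have "[:0,1:] * [:0,1:] * (pderiv Pc * star (pderiv Pc)) = [:0,1:] * [:0,1:] * (pderiv Pd * star (pderiv Pd))"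
      using I3 unfolding MMsq[OF Mc] MMsq[OF Md] I1 by simp
    moreover have "[:0,1:] * [:0,1:] \<noteq> (0 :: complex poly)" by simp
    ultimately show ?thesis using mult_left_cancel by blast
  qed
  have Pc0: "Pc \<noteq> 0"
  proof
    assume "Pc = 0"
    hence "coeff Pc 0 = 0" by simp
    thus False using assms(4) unfolding Pc_def PP_def coeff_summonom acoef_def by simp
  qed
  obtain z where z: "cmod z = 1" and alt: "Pd = smult z Pc \<or> Pd = smult z (star Pc)"
    using poly_phase[OF Pc0 I1 I2] by blast
  show ?thesis
  proof (intro exI conjI)
    show "cmod z = 1" by (rule z)
    show "(\<forall>x. gauss_sum beta lam Km Kp d x = z * gauss_sum beta lam Km Kp c x) \<or>
          (\<forall>x. gauss_sum beta lam Km Kp d x = z * cnj (gauss_sum beta lam Km Kp c x))"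
      using alt
    proof
      assume h: "Pd = smult z Pc"
      show ?thesis by (rule disjI1) (simp add: gs h Pc_def[symmetric] Pd_def[symmetric])
    next
      assume h: "Pd = smult z (star Pc)"
      show ?thesis by (rule disjI2) (simp add: gs h Pc_def[symmetric] Pd_def[symmetric])
    qed
  qed
qed

end
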